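(* Let $A=\bigoplus_{j=1}^k M_{n_j}(\mathbb{C})$ and $B=\bigoplus_{j=1}^l M_{m_j}(\mathbb{C})$ be finite dimensional C*-algebras and let $\phi:A\to B$ be an $L_*$-embedding. Then $\operatorname{mult}_\phi(M_{m_j}(\mathbb{C}))=1$ for all $j=1,\dots,l$.
   Context: In a unital C*-algebra $D$: $\rho_{\min}^D(x)=\inf\{\|x-p\|: p \text{ a minimal projection of } D\}$ (a minimal projection is a nonzero $p=p^2=p^*$ such that every projection $q$ with $qp=q$ satisfies $q=0$ or $q=p$); and $\rho_\sim^D(x,y)=\inf\{\max\{\|x-a\|,\|y-b\|\}: a,b\in D,\ u^*au=b \text{ for some unitary } u\in D\}$. $L_*$ is the language of unital C*-algebras with a unary predicate $P_{\min}$ and a binary predicate $P_\sim$, interpreted as $\rho_{\min}$ and $\rho_\sim$. An $L_*$-embedding $\phi:A\to B$ is an injective unital *-homomorphism with $\rho_{\min}^B(\phi(a))=\rho_{\min}^A(a)$ and $\rho_\sim^B(\phi(a),\phi(a'))=\rho_\sim^A(a,a')$ for all $a,a'\in A$. $E_\phi(n_i,m_j)$ is the multiplicity with which $\phi$ embeds the summand $M_{n_i}(\mathbb{C})$ of $A$ into the summand $M_{m_j}(\mathbb{C})$ of $B$, and $\operatorname{mult}_\phi(M_{m_j}(\mathbb{C}))=\sum_{i=1}^k E_\phi(n_i,m_j)$. *)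

theory Defs
  imports Complex_Main "Jordan_Normal_Form.DL_Rank" "Jordan_Normal_Form.Schur_Decomposition"
begin

text \<open>A finite dimensional C*-algebra  M_{n_1}(C) + ... + M_{n_k}(C)  is modelled by the list
  ns = [n_1,...,n_k] of block sizes; its elements are lists of complex matrices
  [x_1,...,x_k] with x_i an n_i x n_i matrix.\<close>

definition fdalg :: "nat list \<Rightarrow> complex mat list set" where
  "fdalg ns = {xs. length xs = length ns \<and> (\<forall>i<length ns. xs ! i \<in> carrier_mat (ns ! i) (ns ! i))}"

definition fd_add :: "complex mat list \<Rightarrow> complex mat list \<Rightarrow> complex mat list" where
  "fd_add xs ys = map2 (+) xs ys"

definition fd_minus :: "complex mat list \<Rightarrow> complex mat list \<Rightarrow> complex mat list" where
  "fd_minus xs ys = map2 (-) xs ys"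

definition fd_mult :: "complex mat list \<Rightarrow> complex mat list \<Rightarrow> complex mat list" where
  "fd_mult xs ys = map2 (*) xs ys"

definition fd_smult :: "complex \<Rightarrow> complex mat list \<Rightarrow> complex mat list" where
  "fd_smult c xs = map (\<lambda>x. c \<cdot>\<^sub>m x) xs"

definition fd_star :: "complex mat list \<Rightarrow> complex mat list" where
  "fd_star xs = map mat_adjoint xs"

definition fd_one :: "nat list \<Rightarrow> complex mat list" where
  "fd_one ns = map (\<lambda>n. 1\<^sub>m n) ns"

definition fd_zero :: "nat list \<Rightarrow> complex mat list" where
  "fd_zero ns = map (\<lambda>n. 0\<^sub>m n n) ns"

definition cvec_norm :: "complex vec \<Rightarrow> real" where
  "cvec_norm v = sqrt (\<Sum>i<dim_vec v. (cmod (v $ i))\<^sup>2)"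

definition op_norm :: "complex mat \<Rightarrow> real" where
  "op_norm M = Sup {cvec_norm (M *\<^sub>v v) | v. v \<in> carrier_vec (dim_col M) \<and> cvec_norm v \<le> 1}"

definition fd_norm :: "complex mat list \<Rightarrow> real" where
  "fd_norm xs = Max (insert 0 (set (map op_norm xs)))"

definition fd_projection :: "nat list \<Rightarrow> complex mat list \<Rightarrow> bool" where
  "fd_projection ns p \<longleftrightarrow> p \<in> fdalg ns \<and> fd_mult p p = p \<and> fd_star p = p"

definition fd_min_projection :: "nat list \<Rightarrow> complex mat list \<Rightarrow> bool" where
  "fd_min_projection ns p \<longleftrightarrow> fd_projection ns p \<and> p \<noteq> fd_zero ns \<and>
     (\<forall>q. fd_projection ns q \<and> fd_mult q p = q \<longrightarrow> q = fd_zero ns \<or> q = p)"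

definition fd_unitary :: "nat list \<Rightarrow> complex mat list \<Rightarrow> bool" where
  "fd_unitary ns u \<longleftrightarrow> u \<in> fdalg ns \<and> fd_mult (fd_star u) u = fd_one ns \<and> fd_mult u (fd_star u) = fd_one ns"

definition rho_min :: "nat list \<Rightarrow> complex mat list \<Rightarrow> real" where
  "rho_min ns x = Inf {fd_norm (fd_minus x p) | p. fd_min_projection ns p}"

definition rho_sim :: "nat list \<Rightarrow> complex mat list \<Rightarrow> complex mat list \<Rightarrow> real" where
  "rho_sim ns x y = Inf {max (fd_norm (fd_minus x a)) (fd_norm (fd_minus y b)) | a b.
      a \<in> fdalg ns \<and> b \<in> fdalg ns \<and>
      (\<exists>u. fd_unitary ns u \<and> fd_mult (fd_mult (fd_star u) a) u = b)}"

definition unital_star_hom :: "nat list \<Rightarrow> nat list \<Rightarrow> (complex mat list \<Rightarrow> complex mat list) \<Rightarrow> bool" where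
  "unital_star_hom ns ms \<phi> \<longleftrightarrow>
     (\<forall>x\<in>fdalg ns. \<phi> x \<in> fdalg ms) \<and>
     (\<forall>x\<in>fdalg ns. \<forall>y\<in>fdalg ns. \<phi> (fd_add x y) = fd_add (\<phi> x) (\<phi> y)) \<and>
     (\<forall>c. \<forall>x\<in>fdalg ns. \<phi> (fd_smult c x) = fd_smult c (\<phi> x)) \<and>
     (\<forall>x\<in>fdalg ns. \<forall>y\<in>fdalg ns. \<phi> (fd_mult x y) = fd_mult (\<phi> x) (\<phi> y)) \<and>
     (\<forall>x\<in>fdalg ns. \<phi> (fd_star x) = fd_star (\<phi> x)) \<and>
     \<phi> (fd_one ns) = fd_one ms"

definition L_embedding :: "nat list \<Rightarrow> nat list \<Rightarrow> (complex mat list \<Rightarrow> complex mat list) \<Rightarrow> bool" where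
  "L_embedding ns ms \<phi> \<longleftrightarrow> unital_star_hom ns ms \<phi> \<and> inj_on \<phi> (fdalg ns) \<and>
     (\<forall>a\<in>fdalg ns. rho_min ms (\<phi> a) = rho_min ns a) \<and>
     (\<forall>a\<in>fdalg ns. \<forall>a'\<in>fdalg ns. rho_sim ms (\<phi> a) (\<phi> a') = rho_sim ns a a')"

text \<open>Multiplicity E_phi(n_i, m_j): the rank of the j-th block of the image of a rank-one
  projection (the matrix unit e_11) of the i-th summand.\<close>

definition unit11 :: "nat list \<Rightarrow> nat \<Rightarrow> complex mat list" where
  "unit11 ns i = map (\<lambda>t. if t = i then mat (ns ! t) (ns ! t) (\<lambda>(r, c). if r = 0 \<and> c = 0 then 1 else 0)
                          else 0\<^sub>m (ns ! t) (ns ! t)) [0..<length ns]"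

definition cmat_rank :: "complex mat \<Rightarrow> nat" where
  "cmat_rank M = vec_space.rank (dim_row M) M"

definition E_mult :: "nat list \<Rightarrow> nat list \<Rightarrow> (complex mat list \<Rightarrow> complex mat list) \<Rightarrow> nat \<Rightarrow> nat \<Rightarrow> nat" where
  "E_mult ns ms \<phi> i j = cmat_rank (\<phi> (unit11 ns i) ! j)"

definition mult_at :: "nat list \<Rightarrow> nat list \<Rightarrow> (complex mat list \<Rightarrow> complex mat list) \<Rightarrow> nat \<Rightarrow> nat" where
  "mult_at ns ms \<phi> j = (\<Sum>i<length ns. E_mult ns ms \<phi> i j)"

end

theory Submission
  imports Defs "HOL-Analysis.L2_Norm"
begin


lemma conj_cnj[simp]: "conjugate (x::complex) = cnj x"
  by (simp add: conjugate_complex_def)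

lemma adj_dims[simp]: "dim_row (mat_adjoint A) = dim_col A" "dim_col (mat_adjoint A) = dim_row A"
  unfolding mat_adjoint_def by auto

lemma adj_index[simp]: "i < dim_col A \<Longrightarrow> j < dim_row A \<Longrightarrow> mat_adjoint (A::complex mat) $$ (i,j) = cnj (A $$ (j,i))"
  unfolding mat_adjoint_def by (simp add: mat_of_rows_index)

lemma adj_carrier[simp]: "A \<in> carrier_mat n m \<Longrightarrow> mat_adjoint A \<in> carrier_mat m n"
  by auto

definition ip :: "complex vec \<Rightarrow> complex vec \<Rightarrow> complex" where
  "ip v w = (\<Sum>i=0..<dim_vec v. v$i * cnj (w$i))"

definition outer :: "complex vec \<Rightarrow> complex vec \<Rightarrow> complex mat" where
  "outer v w = mat (dim_vec v) (dim_vec w) (\<lambda>(r,c). v$r * cnj (w$c))"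

lemma outer_dims[simp]: "dim_row (outer v w) = dim_vec v" "dim_col (outer v w) = dim_vec w"
  unfolding outer_def by auto

lemma outer_index[simp]: "r < dim_vec v \<Longrightarrow> c < dim_vec w \<Longrightarrow> outer v w $$ (r,c) = v$r * cnj (w$c)"
  unfolding outer_def by auto

lemma outer_carrier[simp]: "v \<in> carrier_vec n \<Longrightarrow> w \<in> carrier_vec m \<Longrightarrow> outer v w \<in> carrier_mat n m"
  unfolding outer_def by auto

lemma adj_adj[simp]: "mat_adjoint (mat_adjoint A) = (A :: complex mat)"
  by (rule eq_matI) auto

lemma adj_outer: "mat_adjoint (outer v w) = outer w v"
  by (rule eq_matI) auto

lemma outer_mult_vec: "x \<in> carrier_vec (dim_vec w) \<Longrightarrow> outer v w *\<^sub>v x = ip x w \<cdot>\<^sub>v v"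
  unfolding ip_def
  by (rule eq_vecI) (auto simp: scalar_prod_def sum_distrib_left mult_ac)

lemma outer_mult_outer: "x \<in> carrier_vec (dim_vec w) \<Longrightarrow> outer v w * outer x y = ip x w \<cdot>\<^sub>m outer v y"
  unfolding ip_def
  by (rule eq_matI) (auto simp: scalar_prod_def sum_distrib_left sum_distrib_right mult_ac)

lemma mult_outer: "A \<in> carrier_mat n (dim_vec v) \<Longrightarrow> A * outer v w = outer (A *\<^sub>v v) w"
  by (rule eq_matI) (auto simp: scalar_prod_def sum_distrib_left sum_distrib_right mult_ac)

lemma outer_mult: "A \<in> carrier_mat (dim_vec w) n \<Longrightarrow> outer v w * A = outer v (mat_adjoint A *\<^sub>v w)"
  by (rule eq_matI) (auto simp: scalar_prod_def sum_distrib_left sum_distrib_right mult_ac)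

lemma adj_mult: fixes A B :: "complex mat" assumes "A \<in> carrier_mat n k" "B \<in> carrier_mat k m" shows "mat_adjoint (A * B) = mat_adjoint B * mat_adjoint A"
proof -
  have d: "dim_row A = n" "dim_col A = k" "dim_row B = k" "dim_col B = m" using assms by auto
  show ?thesis by (rule eq_matI) (simp_all add: d scalar_prod_def mult.commute)
qed

lemma adj_one[simp]: "mat_adjoint (1\<^sub>m n :: complex mat) = 1\<^sub>m n"
  by (rule eq_matI) auto

lemma adj_zero[simp]: "mat_adjoint (0\<^sub>m n m :: complex mat) = 0\<^sub>m m n"
  by (rule eq_matI) auto

lemma adj_minus: fixes A B :: "complex mat" assumes "A \<in> carrier_mat n m" "B \<in> carrier_mat n m" shows "mat_adjoint (A - B) = mat_adjoint A - mat_adjoint B"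
proof -
  have d: "dim_row A = n" "dim_col A = m" "dim_row B = n" "dim_col B = m" using assms by auto
  show ?thesis by (rule eq_matI) (simp_all add: d)
qed

lemma ip_mult: "A \<in> carrier_mat n m \<Longrightarrow> x \<in> carrier_vec m \<Longrightarrow> y \<in> carrier_vec n \<Longrightarrow>
   ip (A *\<^sub>v x) y = ip x (mat_adjoint A *\<^sub>v y)"
  unfolding ip_def
  apply (simp add: scalar_prod_def sum_distrib_left sum_distrib_right mult_ac)
  by (rule sum.swap)

lemma ip_cnj: "dim_vec v = dim_vec w \<Longrightarrow> ip w v = cnj (ip v w)"
  unfolding ip_def by (simp add: mult.commute)



lemma cvec_norm_L2: "cvec_norm v = L2_set (\<lambda>i. cmod (v$i)) {..<dim_vec v}"
  unfolding cvec_norm_def L2_set_def by simp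

lemma cvec_norm_ge0[simp]: "0 \<le> cvec_norm v"
  unfolding cvec_norm_def by (simp add: sum_nonneg)

lemma cvec_norm_triangle: assumes "dim_vec w = dim_vec v"
  shows "cvec_norm (v + w) \<le> cvec_norm v + cvec_norm w"
proof -
  have "cvec_norm (v + w) = L2_set (\<lambda>i. cmod (v$i + w$i)) {..<dim_vec v}"
    unfolding cvec_norm_L2 using assms by (intro L2_set_cong) auto
  also have "\<dots> \<le> L2_set (\<lambda>i. cmod (v$i) + cmod (w$i)) {..<dim_vec v}"
    by (rule L2_set_mono) (auto intro: norm_triangle_ineq)
  also have "\<dots> \<le> cvec_norm v + cvec_norm w"
    unfolding cvec_norm_L2 using assms by (simp add: L2_set_triangle_ineq)
  finally show ?thesis .
qed

lemma cvec_norm_smult: "cvec_norm (c \<cdot>\<^sub>v v) = cmod c * cvec_norm v"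
proof -
  have "cvec_norm (c \<cdot>\<^sub>v v) = L2_set (\<lambda>i. cmod c * cmod (v$i)) {..<dim_vec v}"
    unfolding cvec_norm_L2 by (intro L2_set_cong) (auto simp: norm_mult)
  also have "\<dots> = cmod c * cvec_norm v"
    unfolding cvec_norm_L2 by (simp add: L2_set_right_distrib)
  finally show ?thesis .
qed

lemma cvec_norm_uminus: "cvec_norm (- v) = cvec_norm v"
  unfolding cvec_norm_def by simp

lemma cvec_norm_minus_sym: assumes "dim_vec w = dim_vec v" shows "cvec_norm (v - w) = cvec_norm (w - v)"
  unfolding cvec_norm_def using assms by (simp add: norm_minus_commute)

lemma ip_self: "ip v v = complex_of_real ((cvec_norm v)\<^sup>2)"
proof -
  have "(cvec_norm v)^2 = (\<Sum>i<dim_vec v. (cmod (v$i))^2)" by (simp add: cvec_norm_def sum_nonneg)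
  then show ?thesis unfolding ip_def atLeast0LessThan
    by (simp add: of_real_sum complex_norm_square flip: of_real_power)
qed

lemma cvec_norm_sq: "(cvec_norm v)\<^sup>2 = Re (ip v v)"
  by (simp add: ip_self)

lemma cvec_norm_eq1: "ip v v = 1 \<Longrightarrow> cvec_norm v = 1"
  using cvec_norm_sq[of v] cvec_norm_ge0[of v]
  by (metis one_complex.sel power_one real_sqrt_abs real_sqrt_one abs_of_nonneg)

lemma cvec_norm_zero_iff: "cvec_norm v = 0 \<longleftrightarrow> v = 0\<^sub>v (dim_vec v)"
proof
  assume "cvec_norm v = 0"
  then have "\<forall>i\<in>{..<dim_vec v}. cmod (v$i) = 0"
    unfolding cvec_norm_L2 by (simp add: L2_set_eq_0_iff)
  then show "v = 0\<^sub>v (dim_vec v)" by (intro eq_vecI) auto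
next
  assume "v = 0\<^sub>v (dim_vec v)"
  then show "cvec_norm v = 0" unfolding cvec_norm_def
    by (metis (no_types, lifting) index_zero_vec(1) lessThan_iff norm_zero power_zero_numeral real_sqrt_zero sum.neutral dim_vec)
qed

lemma cvec_norm_unit: "i < n \<Longrightarrow> cvec_norm (unit_vec n i) = 1"
proof -
  assume i: "i < n"
  have "ip (unit_vec n i) (unit_vec n i) = 1"
    unfolding ip_def using i by (simp add: unit_vec_def of_bool_def sum.delta' if_distrib cong: if_cong)
  then show ?thesis by (rule cvec_norm_eq1)
qed

lemma normalize_unit: assumes "x \<noteq> 0\<^sub>v (dim_vec x)"
  shows "ip (complex_of_real (1 / cvec_norm x) \<cdot>\<^sub>v x) (complex_of_real (1 / cvec_norm x) \<cdot>\<^sub>v x) = 1"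
proof -
  have nz: "cvec_norm x \<noteq> 0" using assms cvec_norm_zero_iff by auto
  have "ip (complex_of_real (1 / cvec_norm x) \<cdot>\<^sub>v x) (complex_of_real (1 / cvec_norm x) \<cdot>\<^sub>v x)
      = complex_of_real (1 / cvec_norm x)^2 * ip x x"
    unfolding ip_def by (simp add: sum_distrib_left power2_eq_square mult_ac)
  also have "\<dots> = 1" using nz by (simp add: ip_self power_divide)
  finally show ?thesis .
qed

lemma op_norm_bdd: "bdd_above {cvec_norm (M *\<^sub>v v) | v. v \<in> carrier_vec (dim_col M) \<and> cvec_norm v \<le> 1}"
proof -
  let ?C = "\<Sum>r<dim_row M. \<Sum>c<dim_col M. cmod (M $$ (r,c))"
  have "cvec_norm (M *\<^sub>v v) \<le> ?C" if v: "v \<in> carrier_vec (dim_col M)" "cvec_norm v \<le> 1" for v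
  proof -
    have vc: "cmod (v$c) \<le> 1" if "c < dim_col M" for c
    proof -
      have "cmod (v$c) \<le> cvec_norm v" unfolding cvec_norm_L2
        by (rule member_le_L2_set) (use that v in auto)
      then show ?thesis using v by simp
    qed
    have "cvec_norm (M *\<^sub>v v) \<le> (\<Sum>r<dim_row M. cmod ((M *\<^sub>v v)$r))"
      unfolding cvec_norm_L2 dim_mult_mat_vec by (rule L2_set_le_sum) simp
    also have "\<dots> \<le> ?C"
    proof (rule sum_mono)
      fix r assume r: "r \<in> {..<dim_row M}"
      have "cmod ((M *\<^sub>v v)$r) = cmod (\<Sum>c<dim_col M. M $$ (r,c) * v$c)"
        using r v by (simp add: scalar_prod_def atLeast0LessThan)
      also have "\<dots> \<le> (\<Sum>c<dim_col M. cmod (M $$ (r,c) * v$c))" by (rule norm_sum)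
      also have "\<dots> \<le> (\<Sum>c<dim_col M. cmod (M $$ (r,c)))"
        by (rule sum_mono) (auto simp: norm_mult intro: mult_left_le vc)
      finally show "cmod ((M *\<^sub>v v)$r) \<le> (\<Sum>c<dim_col M. cmod (M $$ (r,c)))" .
    qed
    finally show ?thesis .
  qed
  then show ?thesis by (auto simp: bdd_above_def)
qed

lemma op_norm_ge: "v \<in> carrier_vec (dim_col M) \<Longrightarrow> cvec_norm v \<le> 1 \<Longrightarrow> cvec_norm (M *\<^sub>v v) \<le> op_norm M"
  unfolding op_norm_def by (rule cSup_upper[OF _ op_norm_bdd]) auto

lemma op_norm_zero: "op_norm (0\<^sub>m n m) = 0"
proof -
  have "{cvec_norm (0\<^sub>m n m *\<^sub>v v) | v. v \<in> carrier_vec (dim_col (0\<^sub>m n m)) \<and> cvec_norm v \<le> 1} = {0}"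
  proof -
    have "cvec_norm (0\<^sub>m n m *\<^sub>v v) = 0" if "v \<in> carrier_vec m" for v
      using that by (subst cvec_norm_zero_iff) auto
    moreover have "0\<^sub>v m \<in> carrier_vec m \<and> cvec_norm (0\<^sub>v m) \<le> 1"
      using cvec_norm_zero_iff[of "0\<^sub>v m"] by auto
    ultimately show ?thesis
      apply (intro equalityI subsetI)
       apply auto[1]
      apply (simp only: singleton_iff)
      apply (rule CollectI, rule exI[of _ "0\<^sub>v m"])
      by auto
  qed
  then show ?thesis unfolding op_norm_def by simp
qed

lemma fd_norm_ge: "i < length xs \<Longrightarrow> op_norm (xs!i) \<le> fd_norm xs"
  unfolding fd_norm_def by (rule Max_ge) auto

lemma fd_norm_ge0: "0 \<le> fd_norm xs"
  unfolding fd_norm_def by (rule Max_ge) auto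

lemma fd_norm_zeros: "(\<forall>i<length xs. \<exists>n m. xs!i = 0\<^sub>m n m) \<Longrightarrow> fd_norm xs = 0"
proof -
  assume a: "\<forall>i<length xs. \<exists>n m. xs!i = 0\<^sub>m n m"
  have "set (map op_norm xs) \<subseteq> {0}"
  proof
    fix y assume "y \<in> set (map op_norm xs)"
    then obtain i where i: "i < length xs" "y = op_norm (xs!i)" by (auto simp: in_set_conv_nth)
    then obtain n m where "xs!i = 0\<^sub>m n m" using a by blast
    then show "y \<in> {0}" using i op_norm_zero by simp
  qed
  then have "insert 0 (set (map op_norm xs)) = {0}" by blast
  then show ?thesis unfolding fd_norm_def by (metis Max_singleton)
qed

lemma op_norm_unit_ge: "v \<in> carrier_vec (dim_col M) \<Longrightarrow> ip v v = 1 \<Longrightarrow> cvec_norm (M *\<^sub>v v) \<le> op_norm M"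
  by (rule op_norm_ge) (auto dest: cvec_norm_eq1)



lemma fdalgD: "x \<in> fdalg ns \<Longrightarrow> length x = length ns"
   "x \<in> fdalg ns \<Longrightarrow> i < length ns \<Longrightarrow> x ! i \<in> carrier_mat (ns!i) (ns!i)"
  unfolding fdalg_def by auto

lemma fdalgI: "length x = length ns \<Longrightarrow> (\<And>i. i < length ns \<Longrightarrow> x ! i \<in> carrier_mat (ns!i) (ns!i)) \<Longrightarrow> x \<in> fdalg ns"
  unfolding fdalg_def by auto

lemma fd_ops_length[simp]:
  "length (fd_add x y) = min (length x) (length y)"
  "length (fd_minus x y) = min (length x) (length y)"
  "length (fd_mult x y) = min (length x) (length y)"
  "length (fd_smult c x) = length x"
  "length (fd_star x) = length x"
  "length (fd_one ns) = length ns"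
  "length (fd_zero ns) = length ns"
  unfolding fd_add_def fd_minus_def fd_mult_def fd_smult_def fd_star_def fd_one_def fd_zero_def by auto

lemma fd_ops_nth[simp]:
  "i < length x \<Longrightarrow> i < length y \<Longrightarrow> fd_add x y ! i = x!i + y!i"
  "i < length x \<Longrightarrow> i < length y \<Longrightarrow> fd_minus x y ! i = x!i - y!i"
  "i < length x \<Longrightarrow> i < length y \<Longrightarrow> fd_mult x y ! i = x!i * y!i"
  "i < length x \<Longrightarrow> fd_smult c x ! i = c \<cdot>\<^sub>m (x!i)"
  "i < length x \<Longrightarrow> fd_star x ! i = mat_adjoint (x!i)"
  "i < length ns \<Longrightarrow> fd_one ns ! i = 1\<^sub>m (ns!i)"
  "i < length ns \<Longrightarrow> fd_zero ns ! i = 0\<^sub>m (ns!i) (ns!i)"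
  unfolding fd_add_def fd_minus_def fd_mult_def fd_smult_def fd_star_def fd_one_def fd_zero_def by auto

lemma fd_eqI: "length x = length y \<Longrightarrow> (\<And>i. i < length y \<Longrightarrow> x!i = y!i) \<Longrightarrow> x = y"
  by (rule nth_equalityI) auto

definition blk :: "nat list \<Rightarrow> nat \<Rightarrow> complex mat \<Rightarrow> complex mat list" where
  "blk ms j M = map (\<lambda>t. if t = j then M else 0\<^sub>m (ms!t) (ms!t)) [0..<length ms]"

definition rk1 :: "nat list \<Rightarrow> nat \<Rightarrow> complex vec \<Rightarrow> complex mat list" where
  "rk1 ms j v = blk ms j (outer v v)"

lemma blk_length[simp]: "length (blk ms j M) = length ms"
  unfolding blk_def by simp

lemma blk_nth[simp]: "t < length ms \<Longrightarrow> blk ms j M ! t = (if t = j then M else 0\<^sub>m (ms!t) (ms!t))"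
  unfolding blk_def by simp

lemma blk_fdalg: "j < length ms \<Longrightarrow> M \<in> carrier_mat (ms!j) (ms!j) \<Longrightarrow> blk ms j M \<in> fdalg ms"
  by (rule fdalgI) auto

lemma rk1_fdalg: "j < length ms \<Longrightarrow> v \<in> carrier_vec (ms!j) \<Longrightarrow> rk1 ms j v \<in> fdalg ms"
  unfolding rk1_def by (rule blk_fdalg) auto

lemma outer_smult_left: "outer (d \<cdot>\<^sub>v v) w = d \<cdot>\<^sub>m outer v w"
  by (rule eq_matI) auto

lemma smult_smult_mat: "a \<cdot>\<^sub>m (b \<cdot>\<^sub>m A) = (a * b) \<cdot>\<^sub>m (A :: complex mat)"
  by (rule eq_matI) auto

lemma one_smult_mat[simp]: "1 \<cdot>\<^sub>m A = (A :: complex mat)"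
  by (rule eq_matI) auto

lemma nonzero_vec_entry: "v \<noteq> 0\<^sub>v (dim_vec v) \<Longrightarrow> \<exists>r<dim_vec v. v$r \<noteq> 0"
  by (metis (mono_tags) eq_vecI index_zero_vec(1) index_zero_vec(2))

lemma unit_nonzero: assumes "ip v v = 1" shows "v \<noteq> 0\<^sub>v (dim_vec v)"
proof
  assume a: "v = 0\<^sub>v (dim_vec v)"
  have "v $ i = 0" if "i < dim_vec v" for i using a that by (metis index_zero_vec(1))
  then have "ip v v = 0" unfolding ip_def by simp
  then show False using assms by simp
qed

lemma outer_nonzero: assumes "ip v v = 1" shows "outer v v \<noteq> 0\<^sub>m (dim_vec v) (dim_vec v)"
proof
  assume a: "outer v v = 0\<^sub>m (dim_vec v) (dim_vec v)"
  from nonzero_vec_entry[OF unit_nonzero[OF assms]] obtain r where r: "r < dim_vec v" "v$r \<noteq> 0" by auto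
  have "outer v v $$ (r,r) = v$r * cnj (v$r)" using r by simp
  also have "\<dots> \<noteq> 0" using r by simp
  finally show False using a r by simp
qed

lemma outer_idem: "ip v v = 1 \<Longrightarrow> outer v v * outer v v = outer v v"
  by (simp add: outer_mult_outer)

lemma rk1_nonzero: "j < length ms \<Longrightarrow> v \<in> carrier_vec (ms!j) \<Longrightarrow> ip v v = 1 \<Longrightarrow> rk1 ms j v \<noteq> fd_zero ms"
proof
  assume j: "j < length ms" and v: "v \<in> carrier_vec (ms!j)" "ip v v = 1" and e: "rk1 ms j v = fd_zero ms"
  have "rk1 ms j v ! j = fd_zero ms ! j" using e by simp
  then have "outer v v = 0\<^sub>m (ms!j) (ms!j)" using j unfolding rk1_def by simp
  then show False using outer_nonzero[OF v(2)] v(1) by simp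
qed

lemma rk1_projection: assumes j: "j < length ms" and v: "v \<in> carrier_vec (ms!j)" "ip v v = 1"
  shows "fd_projection ms (rk1 ms j v)"
  unfolding fd_projection_def
proof (intro conjI)
  show "rk1 ms j v \<in> fdalg ms" by (rule rk1_fdalg[OF j v(1)])
  show "fd_mult (rk1 ms j v) (rk1 ms j v) = rk1 ms j v"
    by (rule fd_eqI) (auto simp: rk1_def outer_idem[OF v(2)])
  show "fd_star (rk1 ms j v) = rk1 ms j v"
    by (rule fd_eqI) (auto simp: rk1_def adj_outer)
qed

lemma rk1_min: assumes j: "j < length ms" and v: "v \<in> carrier_vec (ms!j)" "ip v v = 1"
  shows "fd_min_projection ms (rk1 ms j v)"
  unfolding fd_min_projection_def
proof (intro conjI allI impI)
  show "fd_projection ms (rk1 ms j v)" by (rule rk1_projection[OF assms])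
  show "rk1 ms j v \<noteq> fd_zero ms" by (rule rk1_nonzero[OF assms])
  fix q assume "fd_projection ms q \<and> fd_mult q (rk1 ms j v) = q"
  then have q: "q \<in> fdalg ms" "fd_mult q q = q" "fd_star q = q" "fd_mult q (rk1 ms j v) = q"
    unfolding fd_projection_def by auto
  have lq: "length q = length ms" using q(1) fdalgD by auto
  have other: "q ! k = 0\<^sub>m (ms!k) (ms!k)" if k: "k < length ms" "k \<noteq> j" for k
  proof -
    have "q ! k = fd_mult q (rk1 ms j v) ! k" using q(4) by simp
    also have "\<dots> = q!k * 0\<^sub>m (ms!k) (ms!k)" using k lq by (simp add: rk1_def)
    also have "\<dots> = 0\<^sub>m (ms!k) (ms!k)" using fdalgD(2)[OF q(1) k(1)] by simp
    finally show ?thesis .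
  qed
  define n where "n = ms!j"
  define Q where "Q = q!j"
  have Qc: "Q \<in> carrier_mat n n" unfolding Q_def n_def using fdalgD(2)[OF q(1) j] .
  have vc: "v \<in> carrier_vec n" using v n_def by simp
  have QP: "Q * outer v v = Q" unfolding Q_def
    using arg_cong[OF q(4), of "\<lambda>x. x!j"] j lq by (simp add: rk1_def)
  have QQ: "Q * Q = Q" unfolding Q_def using arg_cong[OF q(2), of "\<lambda>x. x!j"] j lq by simp
  have Qa: "mat_adjoint Q = Q" unfolding Q_def using arg_cong[OF q(3), of "\<lambda>x. x!j"] j lq by simp
  define w where "w = Q *\<^sub>v v"
  have wc: "w \<in> carrier_vec n" unfolding w_def using Qc vc by simp
  have Q1: "Q = outer w v" using QP mult_outer[of Q n v v] Qc vc unfolding w_def by simp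
  have Q2: "Q = outer v w" using Qa Q1 adj_outer by metis
  define d where "d = ip v w"
  have "w = Q *\<^sub>v v" by (simp add: w_def)
  also have "\<dots> = d \<cdot>\<^sub>v v" unfolding d_def using Q2 outer_mult_vec[of v w v] vc wc
    by (metis carrier_vecD)
  finally have wd: "w = d \<cdot>\<^sub>v v" .
  have Qd: "Q = d \<cdot>\<^sub>m outer v v" using Q1 wd outer_smult_left by simp
  have oc: "outer v v \<in> carrier_mat n n" using vc by simp
  have oc2: "d \<cdot>\<^sub>m outer v v \<in> carrier_mat n n" using oc by simp
  have "Q * Q = d \<cdot>\<^sub>m (outer v v * (d \<cdot>\<^sub>m outer v v))"
    unfolding Qd by (rule mult_smult_assoc_mat[OF oc oc2])
  also have "\<dots> = d \<cdot>\<^sub>m (d \<cdot>\<^sub>m (outer v v * outer v v))"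
    by (simp add: mult_smult_distrib[OF oc oc])
  also have "\<dots> = (d * d) \<cdot>\<^sub>m outer v v" by (simp add: outer_idem[OF v(2)] smult_smult_mat)
  finally have "Q * Q = (d * d) \<cdot>\<^sub>m outer v v" .
  with QQ Qd have "(d * d) \<cdot>\<^sub>m outer v v = d \<cdot>\<^sub>m outer v v" by simp
  moreover obtain r where r: "r < n" "v$r \<noteq> 0" using nonzero_vec_entry[OF unit_nonzero[OF v(2)]] vc by auto
  ultimately have "d * d * (v$r * cnj (v$r)) = d * (v$r * cnj (v$r))"
    using vc by (metis (no_types, lifting) carrier_vecD index_smult_mat(1) outer_dims outer_index)
  then have "d * d = d" using r by simp
  then have "d = 0 \<or> d = 1" by (metis mult_cancel_right1 mult_eq_0_iff)
  then show "q = fd_zero ms \<or> q = rk1 ms j v"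
  proof
    assume "d = 0"
    then have "Q = 0\<^sub>m n n" using Qd vc by (auto intro!: eq_matI)
    then have "q = fd_zero ms" using lq other by (intro fd_eqI) (auto simp: Q_def n_def)
    then show ?thesis ..
  next
    assume "d = 1"
    then have "Q = outer v v" using Qd by simp
    then have "q = rk1 ms j v" using lq other by (intro fd_eqI) (auto simp: Q_def rk1_def)
    then show ?thesis ..
  qed
qed

lemma proj_unit_vec: assumes P: "P \<in> carrier_mat n n" "P * P = P" "P \<noteq> 0\<^sub>m n n"
  shows "\<exists>v. v \<in> carrier_vec n \<and> ip v v = 1 \<and> P *\<^sub>v v = v"
proof -
  obtain r c where rc: "r < n" "c < n" "P $$ (r,c) \<noteq> 0"
    using P(1,3) by (metis eq_matI carrier_matD index_zero_mat)
  define x where "x = P *\<^sub>v unit_vec n c"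
  have xc: "x \<in> carrier_vec n" unfolding x_def using P by simp
  have "x $ r = P $$ (r,c)" unfolding x_def using rc P(1) by simp
  then have xnz: "x \<noteq> 0\<^sub>v (dim_vec x)" using rc xc by auto
  have Px: "P *\<^sub>v x = x" unfolding x_def using P
    by (metis assoc_mult_mat_vec unit_vec_carrier)
  define v where "v = complex_of_real (1 / cvec_norm x) \<cdot>\<^sub>v x"
  have "ip v v = 1" unfolding v_def by (rule normalize_unit[OF xnz])
  moreover have "P *\<^sub>v v = v" unfolding v_def using Px P(1) xc
    by (simp add: mult_mat_vec)
  moreover have "v \<in> carrier_vec n" using xc v_def by simp
  ultimately show ?thesis by blast
qed

lemma min_rk1: assumes p: "fd_min_projection ms p"
  shows "\<exists>j v. j < length ms \<and> v \<in> carrier_vec (ms!j) \<and> ip v v = 1 \<and> p = rk1 ms j v"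
proof -
  have p1: "p \<in> fdalg ms" "fd_mult p p = p" "fd_star p = p" "p \<noteq> fd_zero ms"
    and pmin: "\<And>q. fd_projection ms q \<Longrightarrow> fd_mult q p = q \<Longrightarrow> q = fd_zero ms \<or> q = p"
    using p unfolding fd_min_projection_def fd_projection_def by auto
  have lp: "length p = length ms" using p1(1) fdalgD by auto
  obtain j where j: "j < length ms" "p!j \<noteq> 0\<^sub>m (ms!j) (ms!j)"
    using p1(4) lp by (metis fd_eqI fd_ops_length(7) fd_ops_nth(7))
  have Pc: "p!j \<in> carrier_mat (ms!j) (ms!j)" using fdalgD(2)[OF p1(1) j(1)] .
  have PP: "p!j * p!j = p!j" using arg_cong[OF p1(2), of "\<lambda>x. x!j"] j lp by simp
  have Pa: "mat_adjoint (p!j) = p!j" using arg_cong[OF p1(3), of "\<lambda>x. x!j"] j lp by simp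
  obtain v where v: "v \<in> carrier_vec (ms!j)" "ip v v = 1" "p!j *\<^sub>v v = v"
    using proj_unit_vec[OF Pc PP j(2)] by blast
  have "fd_mult (rk1 ms j v) p = rk1 ms j v"
  proof (rule fd_eqI)
    fix t assume t: "t < length (rk1 ms j v)"
    show "fd_mult (rk1 ms j v) p ! t = rk1 ms j v ! t"
    proof (cases "t = j")
      case True
      then show ?thesis using t lp v Pc Pa by (simp add: rk1_def outer_mult[of _ v "ms!j"])
    next
      case False
      then show ?thesis using t lp fdalgD(2)[OF p1(1)] by (simp add: rk1_def left_mult_zero_mat)
    qed
  qed (simp add: lp rk1_def)
  then have "rk1 ms j v = fd_zero ms \<or> rk1 ms j v = p"
    using pmin rk1_projection[OF j(1) v(1,2)] by blast
  then have "p = rk1 ms j v" using rk1_nonzero[OF j(1) v(1,2)] by auto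
  then show ?thesis using j v by blast
qed



lemma ip_smult_left: "ip (a \<cdot>\<^sub>v x) y = a * ip x y"
  unfolding ip_def by (simp add: sum_distrib_left mult_ac)

lemma ip_smult_right: "dim_vec y = dim_vec x \<Longrightarrow> ip x (a \<cdot>\<^sub>v y) = cnj a * ip x y"
  unfolding ip_def by (simp add: sum_distrib_left mult_ac)

lemma ip_zero_right: "ip x (0\<^sub>v (dim_vec x)) = 0"
  unfolding ip_def by simp

lemma zero_mat_mult_vec: "y \<in> carrier_vec m \<Longrightarrow> 0\<^sub>m n m *\<^sub>v y = 0\<^sub>v n"
  by (rule eq_vecI) (auto simp: scalar_prod_def)

lemma mat_minus_zero_eq: fixes A B :: "complex mat" assumes "A \<in> carrier_mat n m" "B \<in> carrier_mat n m" "A - B = 0\<^sub>m n m"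
  shows "A = B"
proof (rule eq_matI)
  fix i j assume ij: "i < dim_row B" "j < dim_col B"
  have dd: "dim_row A = n" "dim_col A = m" "dim_row B = n" "dim_col B = m" using assms by auto
  have "(A - B) $$ (i,j) = 0" using assms(3) ij dd by simp
  then show "A $$ (i,j) = B $$ (i,j)" using ij dd by simp
qed (use assms in auto)

lemma unit11_rk1: "i < length ns \<Longrightarrow> 0 < ns!i \<Longrightarrow> unit11 ns i = rk1 ns i (unit_vec (ns!i) 0)"
  unfolding unit11_def rk1_def blk_def
  by (rule nth_equalityI) (auto intro!: eq_matI simp: unit_vec_def)

lemma ip_unit_vec: "i < n \<Longrightarrow> ip (unit_vec n i) (unit_vec n i) = 1"
  unfolding ip_def by (simp add: unit_vec_def of_bool_def sum.delta' if_distrib cong: if_cong)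

lemma mat_minus_self: "(A::complex mat) \<in> carrier_mat n m \<Longrightarrow> A - A = 0\<^sub>m n m"
  by (rule eq_matI) auto

lemma fd_norm_self: assumes "x \<in> fdalg ns" shows "fd_norm (fd_minus x x) = 0"
proof (rule fd_norm_zeros, intro allI impI)
  fix i assume "i < length (fd_minus x x)"
  then have i: "i < length ns" using fdalgD(1)[OF assms] by simp
  have "fd_minus x x ! i = 0\<^sub>m (ns!i) (ns!i)"
    using i fdalgD[OF assms] by (simp add: mat_minus_self)
  then show "\<exists>n m. fd_minus x x ! i = 0\<^sub>m n m" by blast
qed

lemma rho_min_min: assumes "fd_min_projection ns p" shows "rho_min ns p = 0"
proof -
  have pa: "p \<in> fdalg ns" using assms unfolding fd_min_projection_def fd_projection_def by auto
  show ?thesis unfolding rho_min_def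
  proof (rule cInf_eq_minimum)
    show "0 \<in> {fd_norm (fd_minus p pa) |pa. fd_min_projection ns pa}"
      using assms fd_norm_self[OF pa] by force
  qed (auto simp: fd_norm_ge0)
qed

lemma near_min:
  assumes P: "fd_projection ms P" and j: "j < length ms" and v: "v \<in> carrier_vec (ms!j)" "ip v v = 1"
    and d: "fd_norm (fd_minus P (rk1 ms j v)) < 1"
  shows "fd_min_projection ms P"
proof -
  have P1: "P \<in> fdalg ms" "fd_mult P P = P" "fd_star P = P" using P unfolding fd_projection_def by auto
  have lP: "length P = length ms" using P1(1) fdalgD by auto
  have Pc: "\<And>k. k < length ms \<Longrightarrow> P!k \<in> carrier_mat (ms!k) (ms!k)" using fdalgD(2)[OF P1(1)] .
  have PP: "\<And>k. k < length ms \<Longrightarrow> P!k * P!k = P!k"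
    using P1(2) lP by (metis fd_ops_nth(3))
  have Pa: "\<And>k. k < length ms \<Longrightarrow> mat_adjoint (P!k) = P!k"
    using P1(3) lP by (metis fd_ops_nth(5))
  have bn: "op_norm (P!k - rk1 ms j v ! k) < 1" if k: "k < length ms" for k
  proof -
    have "op_norm (fd_minus P (rk1 ms j v) ! k) \<le> fd_norm (fd_minus P (rk1 ms j v))"
      by (rule fd_norm_ge) (simp add: lP k rk1_def)
    then show ?thesis using d k lP by (simp add: rk1_def)
  qed
  have other: "P!k = 0\<^sub>m (ms!k) (ms!k)" if k: "k < length ms" "k \<noteq> j" for k
  proof (rule ccontr)
    assume nz: "P!k \<noteq> 0\<^sub>m (ms!k) (ms!k)"
    obtain y where y: "y \<in> carrier_vec (ms!k)" "ip y y = 1" "P!k *\<^sub>v y = y"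
      using proj_unit_vec[OF Pc[OF k(1)] PP[OF k(1)] nz] by blast
    have "(P!k - 0\<^sub>m (ms!k) (ms!k)) *\<^sub>v y = y"
      using y Pc[OF k(1)] by (simp add: minus_mult_distrib_mat_vec zero_mat_mult_vec)
    then have "cvec_norm y \<le> op_norm (P!k - 0\<^sub>m (ms!k) (ms!k))"
      using op_norm_unit_ge[of y "P!k - 0\<^sub>m (ms!k) (ms!k)"] y Pc[OF k(1)] by simp
    moreover have "op_norm (P!k - 0\<^sub>m (ms!k) (ms!k)) < 1" using bn[OF k(1)] k by (simp add: rk1_def)
    ultimately show False using cvec_norm_eq1[OF y(2)] by simp
  qed
  define n where "n = ms!j"
  define Q where "Q = P!j"
  define R where "R = outer v v"
  have vc: "v \<in> carrier_vec n" using v n_def by simp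
  have Qc: "Q \<in> carrier_mat n n" using Pc[OF j] unfolding Q_def n_def .
  have Rc: "R \<in> carrier_mat n n" using vc unfolding R_def by simp
  have QQ: "Q * Q = Q" using PP[OF j] Q_def by simp
  have Qa: "mat_adjoint Q = Q" using Pa[OF j] Q_def by simp
  have QR: "op_norm (Q - R) < 1" using bn[OF j] j unfolding Q_def R_def by (simp add: rk1_def)
  have bad: False if y: "y \<in> carrier_vec n" "ip y y = 1" "(Q - R) *\<^sub>v y = z" "cvec_norm z = 1" for y z
  proof -
    have "cvec_norm z \<le> op_norm (Q - R)" using op_norm_unit_ge[of y "Q - R"] y Qc Rc by simp
    then show False using QR y(4) by simp
  qed
  have Rv: "R *\<^sub>v y = ip y v \<cdot>\<^sub>v v" if "y \<in> carrier_vec n" for y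
    unfolding R_def using outer_mult_vec[of y v v] that vc by simp
  define x where "x = Q *\<^sub>v v"
  have xc: "x \<in> carrier_vec n" unfolding x_def using Qc vc by simp
  have xnz: "x \<noteq> 0\<^sub>v (dim_vec x)"
  proof
    assume x0: "x = 0\<^sub>v (dim_vec x)"
    have "(Q - R) *\<^sub>v v = - v"
      using x0 xc vc Qc Rc v(2) by (simp add: minus_mult_distrib_mat_vec Rv x_def[symmetric])
    then show False using bad[OF vc v(2)] cvec_norm_uminus cvec_norm_eq1[OF v(2)] by simp
  qed
  define c where "c = complex_of_real (cvec_norm x)"
  define u where "u = complex_of_real (1 / cvec_norm x) \<cdot>\<^sub>v x"
  have cnz: "cvec_norm x \<noteq> 0" using xnz cvec_norm_zero_iff by auto
  have uc: "u \<in> carrier_vec n" using xc u_def by simp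
  have uu: "ip u u = 1" unfolding u_def by (rule normalize_unit[OF xnz])
  have xu: "x = c \<cdot>\<^sub>v u" unfolding u_def c_def using cnz by (intro eq_vecI) auto
  have Qx: "Q *\<^sub>v x = x" unfolding x_def using Qc vc QQ by (metis assoc_mult_mat_vec)
  have Qu: "Q *\<^sub>v u = u" unfolding u_def using Qx Qc xc by (simp add: mult_mat_vec)
  define U where "U = outer u u"
  have Uc: "U \<in> carrier_mat n n" using uc unfolding U_def by simp
  have QU: "Q * U = U" unfolding U_def using mult_outer[of Q n u u] Qc uc Qu by simp
  have UQ: "U * Q = U" unfolding U_def using outer_mult[of Q u n u] Qc uc Qu Qa by simp
  have UU: "U * U = U" unfolding U_def using outer_idem[OF uu] .
  define S where "S = Q - U"
  have Sc: "S \<in> carrier_mat n n" unfolding S_def using Uc by (rule minus_carrier_mat)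
  have SS: "S * S = S"
  proof -
    have "S * S = Q * S - U * S" unfolding S_def
      using minus_mult_distrib_mat[OF Qc Uc Sc[unfolded S_def]] by simp
    also have "\<dots> = (Q * Q - Q * U) - (U * Q - U * U)" unfolding S_def
      using mult_minus_distrib_mat[OF Qc Qc Uc] mult_minus_distrib_mat[OF Uc Qc Uc] by simp
    also have "\<dots> = S" unfolding S_def QQ QU UQ UU using Qc Uc by (intro eq_matI) auto
    finally show ?thesis .
  qed
  show ?thesis
  proof (cases "S = 0\<^sub>m n n")
    case True
    then have QeU: "Q = U" using mat_minus_zero_eq[OF Qc Uc] unfolding S_def by simp
    have "P = rk1 ms j u"
    proof (rule fd_eqI)
      fix k assume k: "k < length (rk1 ms j u)"
      then show "P ! k = rk1 ms j u ! k" using other QeU by (cases "k = j") (auto simp: rk1_def Q_def U_def)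
    qed (simp add: lP rk1_def)
    then show ?thesis using rk1_min[OF j] uc uu n_def by simp
  next
    case False
    obtain y where y: "y \<in> carrier_vec n" "ip y y = 1" "S *\<^sub>v y = y"
      using proj_unit_vec[OF Sc SS False] by blast
    have Uy: "U *\<^sub>v w = ip w u \<cdot>\<^sub>v u" if "w \<in> carrier_vec n" for w
      unfolding U_def using outer_mult_vec[of w u u] that uc by simp
    have Su: "S *\<^sub>v u = 0\<^sub>v n" unfolding S_def using Qc Uc uc
      by (simp add: minus_mult_distrib_mat_vec Qu Uy uu)
    have Sa: "mat_adjoint S = S" unfolding S_def U_def using adj_minus[OF Qc Uc] Qa adj_outer
      by (simp add: U_def)
    have yu: "ip y u = 0"
    proof -
      have "ip y u = ip (S *\<^sub>v y) u" using y by simp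
      also have "\<dots> = ip y (mat_adjoint S *\<^sub>v u)" using ip_mult[OF Sc y(1) uc] .
      also have "\<dots> = 0" using Sa Su ip_zero_right[of y] y(1) by simp
      finally show ?thesis .
    qed
    have Qy: "Q *\<^sub>v y = y"
    proof -
      have "y = S *\<^sub>v y" using y by simp
      also have "\<dots> = Q *\<^sub>v y - U *\<^sub>v y" unfolding S_def using Qc Uc y by (simp add: minus_mult_distrib_mat_vec)
      also have "\<dots> = Q *\<^sub>v y" using Uy[OF y(1)] yu Qc y(1) uc by (intro eq_vecI) auto
      finally show ?thesis by simp
    qed
    have yv: "ip y v = 0"
    proof -
      have "ip y v = ip (Q *\<^sub>v y) v" using Qy by simp
      also have "\<dots> = ip y (Q *\<^sub>v v)" using ip_mult[OF Qc y(1) vc] Qa by simp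
      also have "\<dots> = ip y (c \<cdot>\<^sub>v u)" using xu x_def by simp
      also have "\<dots> = 0" using ip_smult_right[of u y c] uc y(1) yu by simp
      finally show ?thesis .
    qed
    have "(Q - R) *\<^sub>v y = y"
      using Qc Rc y(1) vc by (simp add: minus_mult_distrib_mat_vec Qy Rv yv) (rule eq_vecI, auto)
    then show ?thesis using bad[OF y(1,2)] cvec_norm_eq1[OF y(2)] by blast
  qed
qed



lemma ip_minus_left: "dim_vec y = dim_vec x \<Longrightarrow> ip (x - y) z = ip x z - ip y z"
  unfolding ip_def by (simp add: sum_subtractf algebra_simps)

lemma ip_minus_right: "dim_vec y = dim_vec x \<Longrightarrow> dim_vec z = dim_vec x \<Longrightarrow> ip x (y - z) = ip x y - ip x z"
  unfolding ip_def by (simp add: sum_subtractf algebra_simps)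

lemma isometry_norm: assumes B: "B \<in> carrier_mat n n" "mat_adjoint B * B = 1\<^sub>m n" and w: "w \<in> carrier_vec n"
  shows "cvec_norm (B *\<^sub>v w) = cvec_norm w"
proof -
  have "ip (B *\<^sub>v w) (B *\<^sub>v w) = ip w (mat_adjoint B *\<^sub>v (B *\<^sub>v w))"
    using ip_mult[OF B(1) w] B w by simp
  also have "\<dots> = ip w w" using assoc_mult_mat_vec[of "mat_adjoint B" n n B n w, symmetric] B w by simp
  finally have "(cvec_norm (B *\<^sub>v w))\<^sup>2 = (cvec_norm w)\<^sup>2" by (simp add: cvec_norm_sq)
  then show ?thesis by (simp add: power2_eq_iff_nonneg)
qed

lemma fd_one_fdalg: "fd_one ns \<in> fdalg ns"
  by (rule fdalgI) auto

lemma fd_zero_fdalg: "fd_zero ns \<in> fdalg ns"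
  by (rule fdalgI) auto

context
  fixes ns ms \<phi> assumes hom: "unital_star_hom ns ms \<phi>"
begin

lemma hom_fdalg: "x \<in> fdalg ns \<Longrightarrow> \<phi> x \<in> fdalg ms"
  and hom_add: "x \<in> fdalg ns \<Longrightarrow> y \<in> fdalg ns \<Longrightarrow> \<phi> (fd_add x y) = fd_add (\<phi> x) (\<phi> y)"
  and hom_smult: "x \<in> fdalg ns \<Longrightarrow> \<phi> (fd_smult c x) = fd_smult c (\<phi> x)"
  and hom_mult: "x \<in> fdalg ns \<Longrightarrow> y \<in> fdalg ns \<Longrightarrow> \<phi> (fd_mult x y) = fd_mult (\<phi> x) (\<phi> y)"
  and hom_star: "x \<in> fdalg ns \<Longrightarrow> \<phi> (fd_star x) = fd_star (\<phi> x)"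
  and hom_one: "\<phi> (fd_one ns) = fd_one ms"
  using hom unfolding unital_star_hom_def by auto

lemma hom_zero: "\<phi> (fd_zero ns) = fd_zero ms"
proof -
  have z: "fd_zero ns = fd_smult 0 (fd_one ns)"
    by (rule fd_eqI) (auto intro!: eq_matI)
  have "\<phi> (fd_zero ns) = fd_smult 0 (fd_one ms)"
    unfolding z hom_smult[OF fd_one_fdalg] hom_one ..
  also have "\<dots> = fd_zero ms" by (rule fd_eqI) (auto intro!: eq_matI)
  finally show ?thesis .
qed

lemma hom_proj: "fd_projection ns x \<Longrightarrow> fd_projection ms (\<phi> x)"
  unfolding fd_projection_def using hom_fdalg hom_mult hom_star by metis

end

lemma fd_mult_nth': "x \<in> fdalg ns \<Longrightarrow> y \<in> fdalg ns \<Longrightarrow> i < length ns \<Longrightarrow> fd_mult x y ! i = x!i * y!i"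
  by (simp add: fdalgD)

lemma sim_lower: assumes i: "i < length ns" "i' < length ns" "i \<noteq> i'" and pos: "0 < ns!i"
  shows "1/2 \<le> rho_sim ns (unit11 ns i) (unit11 ns i')"
proof -
  define e where "e = unit11 ns i"
  define e' where "e' = unit11 ns i'"
  define T where "T = {max (fd_norm (fd_minus e a)) (fd_norm (fd_minus e' b)) | a b.
      a \<in> fdalg ns \<and> b \<in> fdalg ns \<and>
      (\<exists>u. fd_unitary ns u \<and> fd_mult (fd_mult (fd_star u) a) u = b)}"
  define n where "n = ns!i"
  have ec: "e \<in> fdalg ns" unfolding e_def unit11_def by (rule fdalgI) (auto)
  have ei: "e ! i = outer (unit_vec n 0) (unit_vec n 0)"
    using unit11_rk1[OF i(1) pos] i unfolding e_def rk1_def n_def by simp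
  have e'i: "e' ! i = 0\<^sub>m n n" unfolding e'_def unit11_def n_def using i by simp
  have "T \<noteq> {}"
  proof -
    have "fd_unitary ns (fd_one ns)" unfolding fd_unitary_def
      by (auto intro!: fd_eqI simp: fd_one_fdalg)
    moreover have "fd_mult (fd_mult (fd_star (fd_one ns)) e) (fd_one ns) = e"
    proof (intro fd_eqI)
      fix k assume "k < length e"
      then have k: "k < length ns" using fdalgD(1)[OF ec] by simp
      have "e!k \<in> carrier_mat (ns!k) (ns!k)" using fdalgD(2)[OF ec k] .
      then show "fd_mult (fd_mult (fd_star (fd_one ns)) e) (fd_one ns) ! k = e ! k"
        using k fdalgD(1)[OF ec] by simp
    qed (simp add: fdalgD(1)[OF ec])
    ultimately show ?thesis unfolding T_def using ec by blast
  qed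
  moreover have "1/2 \<le> t" if "t \<in> T" for t
  proof -
    obtain a b u where ab: "t = max (fd_norm (fd_minus e a)) (fd_norm (fd_minus e' b))"
      "a \<in> fdalg ns" "b \<in> fdalg ns" "fd_unitary ns u" "fd_mult (fd_mult (fd_star u) a) u = b"
      using \<open>t \<in> T\<close> unfolding T_def by blast
    have uc: "u \<in> fdalg ns" using ab(4) unfolding fd_unitary_def by auto
    define X where "X = a!i"
    define Y where "Y = b!i"
    define W where "W = u!i"
    have Xc: "X \<in> carrier_mat n n" unfolding X_def n_def using fdalgD(2)[OF ab(2) i(1)] .
    have Yc: "Y \<in> carrier_mat n n" unfolding Y_def n_def using fdalgD(2)[OF ab(3) i(1)] .
    have Wc: "W \<in> carrier_mat n n" unfolding W_def n_def using fdalgD(2)[OF uc i(1)] .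
    have WW1: "mat_adjoint W * W = 1\<^sub>m n" and WW2: "W * mat_adjoint W = 1\<^sub>m n"
      using ab(4) i(1) uc unfolding fd_unitary_def W_def n_def
      by (metis fd_ops_length(5) fd_ops_nth(3) fd_ops_nth(5) fd_ops_nth(6) fdalgD(1))+
    have WXW: "mat_adjoint W * X * W = Y"
      using arg_cong[OF ab(5), of "\<lambda>x. x!i"] i(1) uc ab(2) unfolding W_def X_def Y_def
      by (simp add: fdalgD)
    define e0 :: "complex vec" where "e0 = unit_vec n 0"
    have e0c: "e0 \<in> carrier_vec n" unfolding e0_def by simp
    have e0u: "ip e0 e0 = 1" unfolding e0_def using pos n_def ip_unit_vec by simp
    have Ee0: "outer e0 e0 *\<^sub>v e0 = e0" using outer_mult_vec[of e0 e0 e0] e0u e0c by simp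
    have n1: "cvec_norm (e0 - X *\<^sub>v e0) \<le> fd_norm (fd_minus e a)"
    proof -
      have "cvec_norm ((outer e0 e0 - X) *\<^sub>v e0) \<le> op_norm (outer e0 e0 - X)"
        by (rule op_norm_unit_ge) (use e0c Xc e0u in auto)
      also have "\<dots> = op_norm (fd_minus e a ! i)" using ei i ec ab(2)
        by (simp add: fdalgD X_def e0_def)
      also have "\<dots> \<le> fd_norm (fd_minus e a)" by (rule fd_norm_ge) (use i ec ab(2) in \<open>simp add: fdalgD\<close>)
      moreover have "(outer e0 e0 - X) *\<^sub>v e0 = e0 - X *\<^sub>v e0"
        using minus_mult_distrib_mat_vec[of "outer e0 e0" n n X e0] e0c Xc Ee0 by simp
      ultimately show ?thesis by simp
    qed
    define z where "z = mat_adjoint W *\<^sub>v e0"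
    have zc: "z \<in> carrier_vec n" unfolding z_def using mult_mat_vec_carrier[OF adj_carrier[OF Wc] e0c] .
    have zu: "ip z z = 1"
    proof -
      have "ip z z = ip e0 (mat_adjoint (mat_adjoint W) *\<^sub>v z)"
        unfolding z_def using ip_mult[of "mat_adjoint W" n n e0 "mat_adjoint W *\<^sub>v e0"] Wc e0c zc[unfolded z_def] by simp
      also have "\<dots> = ip e0 e0" using Wc e0c WW2 assoc_mult_mat_vec[of W n n "mat_adjoint W" n e0, symmetric]
        unfolding z_def by simp
      finally show ?thesis using e0u by simp
    qed
    have n2: "cvec_norm (X *\<^sub>v e0) \<le> fd_norm (fd_minus e' b)"
    proof -
      have "Y *\<^sub>v z = mat_adjoint W *\<^sub>v (X *\<^sub>v e0)"
      proof -
        have "Y *\<^sub>v z = (mat_adjoint W * X * W) *\<^sub>v (mat_adjoint W *\<^sub>v e0)" using WXW z_def by simp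
        also have "\<dots> = (mat_adjoint W * X) *\<^sub>v ((W * mat_adjoint W) *\<^sub>v e0)"
        proof -
          have Ac: "mat_adjoint W * X \<in> carrier_mat n n" using mult_carrier_mat[OF adj_carrier[OF Wc] Xc] .
          have Wac: "mat_adjoint W \<in> carrier_mat n n" using Wc by simp
          show ?thesis using assoc_mult_mat_vec[OF Ac Wc zc[unfolded z_def]] assoc_mult_mat_vec[OF Wc Wac e0c] by simp
        qed
        also have "\<dots> = mat_adjoint W *\<^sub>v (X *\<^sub>v e0)"
        proof -
          have "(W * mat_adjoint W) *\<^sub>v e0 = e0" using WW2 e0c by simp
          moreover have "(mat_adjoint W * X) *\<^sub>v e0 = mat_adjoint W *\<^sub>v (X *\<^sub>v e0)"
            by (rule assoc_mult_mat_vec[OF adj_carrier[OF Wc] Xc e0c])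
          ultimately show ?thesis by simp
        qed
        finally show ?thesis .
      qed
      have Xe0c: "X *\<^sub>v e0 \<in> carrier_vec n" using Xc e0c by simp
      have "(0\<^sub>m n n - Y) *\<^sub>v z = 0\<^sub>v n - Y *\<^sub>v z"
        using minus_mult_distrib_mat_vec[of "0\<^sub>m n n" n n Y z] Yc zc zero_mat_mult_vec[OF zc] by simp
      moreover have dY: "dim_row Y = n" using Yc by simp
      ultimately have "cvec_norm ((0\<^sub>m n n - Y) *\<^sub>v z) = cvec_norm (Y *\<^sub>v z)"
        by (simp add: cvec_norm_def)
      also have "\<dots> = cvec_norm (X *\<^sub>v e0)"
        unfolding \<open>Y *\<^sub>v z = mat_adjoint W *\<^sub>v (X *\<^sub>v e0)\<close>
        by (rule isometry_norm[OF adj_carrier[OF Wc] _ Xe0c]) (simp add: WW2)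
      finally have "cvec_norm ((0\<^sub>m n n - Y) *\<^sub>v z) = cvec_norm (X *\<^sub>v e0)" .
      moreover have "cvec_norm ((0\<^sub>m n n - Y) *\<^sub>v z) \<le> op_norm (0\<^sub>m n n - Y)"
        by (rule op_norm_unit_ge) (use zc Yc zu in auto)
      moreover have "op_norm (0\<^sub>m n n - Y) = op_norm (fd_minus e' b ! i)"
        using e'i i ab(3) by (simp add: fdalgD Y_def e'_def unit11_def)
      moreover have "op_norm (fd_minus e' b ! i) \<le> fd_norm (fd_minus e' b)"
        by (rule fd_norm_ge) (use i ab(3) in \<open>simp add: fdalgD e'_def unit11_def\<close>)
      ultimately show ?thesis by linarith
    qed
    have "1 \<le> cvec_norm (e0 - X *\<^sub>v e0) + cvec_norm (X *\<^sub>v e0)"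
    proof -
      have "e0 = (e0 - X *\<^sub>v e0) + X *\<^sub>v e0" using e0c Xc by (intro eq_vecI) auto
      then have "cvec_norm e0 \<le> cvec_norm (e0 - X *\<^sub>v e0) + cvec_norm (X *\<^sub>v e0)"
        using cvec_norm_triangle[of "X *\<^sub>v e0" "e0 - X *\<^sub>v e0"] Xc e0c by simp
      then show ?thesis using cvec_norm_eq1[OF e0u] by simp
    qed
    then show ?thesis using n1 n2 ab(1) by linarith
  qed
  ultimately have "1/2 \<le> Inf T" by (rule cInf_greatest)
  then show ?thesis unfolding rho_sim_def T_def e_def e'_def .
qed



lemma sim_zero: assumes j: "j < length ms" and v: "v \<in> carrier_vec (ms!j)" "ip v v = 1"
  and w: "w \<in> carrier_vec (ms!j)" "ip w w = 1" and vw: "ip v w = 0"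
  shows "rho_sim ms (rk1 ms j v) (rk1 ms j w) \<le> 0"
proof -
  define n where "n = ms!j"
  have vc: "v \<in> carrier_vec n" and wc: "w \<in> carrier_vec n" using v w n_def by auto
  define z where "z = v - w"
  have zc: "z \<in> carrier_vec n" unfolding z_def using vc wc by simp
  have wv: "ip w v = 0" using ip_cnj[of w v] vw vc wc by simp
  have vz: "ip v z = 1" unfolding z_def using ip_minus_right[of v v w] vc wc v(2) vw by simp
  have wz: "ip w z = -1" unfolding z_def using ip_minus_right[of v w w] vc wc w(2) wv by simp
  have zz: "ip z z = 2" using ip_minus_left[of w v z] vc wc vz wz unfolding z_def[symmetric] by simp
  define Z where "Z = outer z z"
  have Zc: "Z \<in> carrier_mat n n" unfolding Z_def using zc by simp
  define U where "U = 1\<^sub>m n - Z"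
  have Uc: "U \<in> carrier_mat n n" unfolding U_def using Zc by (rule minus_carrier_mat)
  have Ua: "mat_adjoint U = U" unfolding U_def Z_def using adj_minus[of "1\<^sub>m n" n n "outer z z"] zc
    by (simp add: adj_outer)
  have ZZ: "Z * Z = 2 \<cdot>\<^sub>m Z" unfolding Z_def using outer_mult_outer[of z z z z] zc zz by simp
  have UU: "U * U = 1\<^sub>m n"
  proof -
    have "U * U = 1\<^sub>m n * U - Z * U" unfolding U_def
      using minus_mult_distrib_mat[OF one_carrier_mat Zc Uc[unfolded U_def]] by simp
    also have "\<dots> = U - (Z * 1\<^sub>m n - Z * Z)" unfolding U_def
      using mult_minus_distrib_mat[OF Zc one_carrier_mat Zc] Zc by simp
    also have "\<dots> = 1\<^sub>m n" unfolding U_def ZZ using Zc by (intro eq_matI) auto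
    finally show ?thesis .
  qed
  have Uv: "U *\<^sub>v v = w"
  proof -
    have "U *\<^sub>v v = v - Z *\<^sub>v v" unfolding U_def using minus_mult_distrib_mat_vec[OF one_carrier_mat Zc vc] vc by simp
    also have "Z *\<^sub>v v = z" unfolding Z_def using outer_mult_vec[of v z z] vc zc vz by simp
    finally show ?thesis unfolding z_def using vc wc by (intro eq_vecI) auto
  qed
  have conj: "mat_adjoint U * outer v v * U = outer w w"
  proof -
    have "U * outer v v = outer w v" using mult_outer[of U n v v] Uc vc Uv by simp
    moreover have "outer w v * U = outer w w" using outer_mult[of U v n w] Uc vc Uv Ua by simp
    ultimately show ?thesis using Ua by simp
  qed
  define u where "u = map (\<lambda>t. if t = j then U else 1\<^sub>m (ms!t)) [0..<length ms]"
  have ul: "length u = length ms" unfolding u_def by simp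
  have un: "\<And>t. t < length ms \<Longrightarrow> u ! t = (if t = j then U else 1\<^sub>m (ms!t))" unfolding u_def by simp
  have uc: "u \<in> fdalg ms" using Uc n_def by (intro fdalgI) (auto simp: ul un)
  have uu: "fd_unitary ms u" unfolding fd_unitary_def
  proof (intro conjI)
    show "fd_mult (fd_star u) u = fd_one ms"
      by (rule fd_eqI) (auto simp: ul un Ua UU n_def)
    show "fd_mult u (fd_star u) = fd_one ms"
      by (rule fd_eqI) (auto simp: ul un Ua UU n_def)
  qed (rule uc)
  have cj: "fd_mult (fd_mult (fd_star u) (rk1 ms j v)) u = rk1 ms j w"
    by (rule fd_eqI) (auto simp: ul un rk1_def conj n_def)
  define T where "T = {max (fd_norm (fd_minus (rk1 ms j v) a)) (fd_norm (fd_minus (rk1 ms j w) b)) | a b.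
      a \<in> fdalg ms \<and> b \<in> fdalg ms \<and>
      (\<exists>u. fd_unitary ms u \<and> fd_mult (fd_mult (fd_star u) a) u = b)}"
  have rv: "rk1 ms j v \<in> fdalg ms" and rw: "rk1 ms j w \<in> fdalg ms" using rk1_fdalg j v w by auto
  have "0 \<in> T" unfolding T_def using rv rw uu cj fd_norm_self[OF rv] fd_norm_self[OF rw]
    by (intro CollectI exI[of _ "rk1 ms j v"] exI[of _ "rk1 ms j w"]) auto
  moreover have "bdd_below T" unfolding T_def bdd_below_def
    by (rule exI[of _ 0]) (auto simp: fd_norm_ge0 le_max_iff_disj)
  ultimately have "Inf T \<le> 0" by (rule cInf_lower)
  then show ?thesis unfolding rho_sim_def T_def .
qed

lemma rk1_orth: assumes j: "j < length ms" and v: "v \<in> carrier_vec (ms!j)" "ip v v = 1"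
  and w: "w \<in> carrier_vec (ms!j)" "ip w w = 1" and z: "fd_mult (rk1 ms j v) (rk1 ms j w) = fd_zero ms"
  shows "ip v w = 0"
proof -
  have "outer v v * outer w w = 0\<^sub>m (ms!j) (ms!j)" using arg_cong[OF z, of "\<lambda>x. x!j"] j by (simp add: rk1_def)
  then have e: "ip w v \<cdot>\<^sub>m outer v w = 0\<^sub>m (ms!j) (ms!j)" using outer_mult_outer[of w v v w] v w by simp
  obtain r where r: "r < dim_vec v" "v$r \<noteq> 0" using nonzero_vec_entry[OF unit_nonzero[OF v(2)]] by auto
  obtain c where c: "c < dim_vec w" "w$c \<noteq> 0" using nonzero_vec_entry[OF unit_nonzero[OF w(2)]] by auto
  have "(ip w v \<cdot>\<^sub>m outer v w) $$ (r,c) = ip w v * (v$r * cnj (w$c))" using r c by simp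
  moreover have "(ip w v \<cdot>\<^sub>m outer v w) $$ (r,c) = 0" using e r c v w by simp
  ultimately have "ip w v = 0" using r c by simp
  then show ?thesis using ip_cnj[of v w] v w by simp
qed

lemma unit11_fdalg: "unit11 ns i \<in> fdalg ns"
  unfolding unit11_def by (rule fdalgI) auto

lemma unit11_orth: assumes "i \<noteq> i'" shows "fd_mult (unit11 ns i) (unit11 ns i') = fd_zero ns"
  by (rule fd_eqI) (use assms in \<open>auto simp: unit11_def\<close>)

lemma img_min: assumes L: "L_embedding ns ms \<phi>" and i: "i < length ns" "0 < ns!i"
  and m: "0 < length ms" "0 < ms!0"
  shows "fd_min_projection ms (\<phi> (unit11 ns i))"
proof -
  have hom: "unital_star_hom ns ms \<phi>" using L unfolding L_embedding_def by auto
  define e where "e = unit11 ns i"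
  have e: "e = rk1 ns i (unit_vec (ns!i) 0)" unfolding e_def using unit11_rk1[OF i] .
  have emin: "fd_min_projection ns e" unfolding e using rk1_min[OF i(1)] ip_unit_vec[OF i(2)] by simp
  have ec: "e \<in> fdalg ns" unfolding e_def by (rule unit11_fdalg)
  have "rho_min ms (\<phi> e) = rho_min ns e" using L ec unfolding L_embedding_def by auto
  also have "\<dots> = 0" by (rule rho_min_min[OF emin])
  finally have r0: "rho_min ms (\<phi> e) = 0" .
  define S where "S = {fd_norm (fd_minus (\<phi> e) p) | p. fd_min_projection ms p}"
  have "S \<noteq> {}" unfolding S_def using rk1_min[OF m(1), of "unit_vec (ms!0) 0"] ip_unit_vec[OF m(2)] by auto
  moreover have "Inf S < 1" using r0 unfolding rho_min_def S_def by simp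
  ultimately obtain s where "s \<in> S" "s < 1" using cInf_lessD by blast
  then obtain p where p: "fd_min_projection ms p" "fd_norm (fd_minus (\<phi> e) p) < 1" unfolding S_def by auto
  obtain j v where jv: "j < length ms" "v \<in> carrier_vec (ms!j)" "ip v v = 1" "p = rk1 ms j v"
    using min_rk1[OF p(1)] by blast
  have "fd_projection ms (\<phi> e)" using hom_proj[OF hom] emin unfolding fd_min_projection_def by auto
  then show ?thesis using near_min[OF _ jv(1-3)] p(2) jv(4) unfolding e_def by simp
qed



lemma fd_add_fdalg: "x \<in> fdalg ns \<Longrightarrow> y \<in> fdalg ns \<Longrightarrow> fd_add x y \<in> fdalg ns"
  by (rule fdalgI) (auto simp: fdalgD)
lemma fd_smult_fdalg: "x \<in> fdalg ns \<Longrightarrow> fd_smult c x \<in> fdalg ns"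
  by (rule fdalgI) (auto simp: fdalgD)
lemma fd_mult_fdalg: assumes x: "x \<in> fdalg ns" and y: "y \<in> fdalg ns" shows "fd_mult x y \<in> fdalg ns"
proof (rule fdalgI)
  fix i assume i: "i < length ns"
  show "fd_mult x y ! i \<in> carrier_mat (ns!i) (ns!i)"
    using mult_carrier_mat[OF fdalgD(2)[OF x i] fdalgD(2)[OF y i]] i x y by (simp add: fdalgD)
qed (use x y in \<open>simp add: fdalgD\<close>)

definition Emat :: "nat \<Rightarrow> nat \<Rightarrow> nat \<Rightarrow> complex mat" where
  "Emat n r s = mat n n (\<lambda>(a,b). if a = r \<and> b = s then 1 else 0)"

lemma Emat_carrier[simp]: "Emat n r s \<in> carrier_mat n n"
  unfolding Emat_def by simp

lemma Emat_mult: assumes "p < n" shows "Emat n r p * Emat n p s = Emat n r s"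
proof (rule eq_matI)
  fix a b assume ab: "a < dim_row (Emat n r s)" "b < dim_col (Emat n r s)"
  have "(Emat n r p * Emat n p s) $$ (a,b) = (\<Sum>k=0..<n. (if a = r \<and> k = p then 1 else 0) * (if k = p \<and> b = s then 1 else 0))"
    using ab by (simp add: Emat_def scalar_prod_def)
  also have "\<dots> = (\<Sum>k=0..<n. if k = p then (if a = r \<and> b = s then 1 else 0) else 0)"
    by (rule sum.cong) auto
  also have "\<dots> = Emat n r s $$ (a,b)" using assms ab by (simp add: Emat_def)
  finally show "(Emat n r p * Emat n p s) $$ (a,b) = Emat n r s $$ (a,b)" .
qed (auto simp: Emat_def)

lemma unit11_blk: "i < length ns \<Longrightarrow> unit11 ns i = blk ns i (Emat (ns!i) 0 0)"
  unfolding unit11_def blk_def Emat_def by (rule nth_equalityI) auto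

lemma blk_mult: "A \<in> carrier_mat (ns!i) (ns!i) \<Longrightarrow> B \<in> carrier_mat (ns!i) (ns!i) \<Longrightarrow>
  fd_mult (blk ns i A) (blk ns i B) = blk ns i (A * B)"
  by (rule fd_eqI) auto

lemma blk_add: "A \<in> carrier_mat (ns!i) (ns!i) \<Longrightarrow> B \<in> carrier_mat (ns!i) (ns!i) \<Longrightarrow>
  fd_add (blk ns i A) (blk ns i B) = blk ns i (A + B)"
  by (rule fd_eqI) auto

lemma blk_smult: "fd_smult c (blk ns i A) = blk ns i (c \<cdot>\<^sub>m A)"
  by (rule fd_eqI) auto

lemma blk_zero: "blk ns i (0\<^sub>m (ns!i) (ns!i)) = fd_zero ns"
  by (rule fd_eqI) auto

definition tr :: "nat \<Rightarrow> complex mat \<Rightarrow> nat \<Rightarrow> complex mat" where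
  "tr n M t = mat n n (\<lambda>(a,b). if a * n + b < t then M $$ (a,b) else 0)"

lemma tr_carrier: "tr n M t \<in> carrier_mat n n" unfolding tr_def by simp

lemma tr_0: "tr n M 0 = 0\<^sub>m n n" unfolding tr_def by (rule eq_matI) auto

lemma tr_full: assumes "M \<in> carrier_mat n n" shows "tr n M (n*n) = M"
proof (rule eq_matI)
  fix a b assume ab: "a < dim_row M" "b < dim_col M"
  then have a: "a < n" and b: "b < n" using assms by auto
  have "a * n + b < (a + 1) * n" using b by simp
  also have "\<dots> \<le> n * n" using a by (intro mult_right_mono) auto
  finally have "a * n + b < n * n" .
  then show "tr n M (n*n) $$ (a,b) = M $$ (a,b)" using a b unfolding tr_def by auto
qed (use assms in \<open>auto simp: tr_def\<close>)

lemma tr_Suc: assumes "t < n * n"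
  shows "tr n M (Suc t) = tr n M t + M $$ (t div n, t mod n) \<cdot>\<^sub>m Emat n (t div n) (t mod n)"
proof (rule eq_matI)
  fix a b assume ab: "a < dim_row (tr n M t + M $$ (t div n, t mod n) \<cdot>\<^sub>m Emat n (t div n) (t mod n))"
    "b < dim_col (tr n M t + M $$ (t div n, t mod n) \<cdot>\<^sub>m Emat n (t div n) (t mod n))"
  then have a: "a < n" and b: "b < n" by (auto simp: tr_def Emat_def)
  have eq: "a * n + b = t \<longleftrightarrow> a = t div n \<and> b = t mod n"
  proof
    assume "a * n + b = t"
    then show "a = t div n \<and> b = t mod n" using b by auto
  next
    assume "a = t div n \<and> b = t mod n"
    then show "a * n + b = t" by simp
  qed
  show "tr n M (Suc t) $$ (a,b) = (tr n M t + M $$ (t div n, t mod n) \<cdot>\<^sub>m Emat n (t div n) (t mod n)) $$ (a,b)"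
    using a b eq by (auto simp: tr_def Emat_def)
qed (auto simp: tr_def Emat_def)

lemma block_kill:
  assumes hom: "unital_star_hom ns ms \<phi>" and j: "j < length ms"
    and pos: "\<forall>n\<in>set ns. 0 < n"
    and z: "\<And>i. i < length ns \<Longrightarrow> \<phi> (unit11 ns i) ! j = 0\<^sub>m (ms!j) (ms!j)"
  shows "\<phi> (fd_one ns) ! j = 0\<^sub>m (ms!j) (ms!j)"
proof -
  define K where "K = {x \<in> fdalg ns. \<phi> x ! j = 0\<^sub>m (ms!j) (ms!j)}"
  have len: "\<And>x. x \<in> fdalg ns \<Longrightarrow> length (\<phi> x) = length ms" using hom_fdalg[OF hom] fdalgD by blast
  have car: "\<And>x. x \<in> fdalg ns \<Longrightarrow> \<phi> x ! j \<in> carrier_mat (ms!j) (ms!j)"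
    using hom_fdalg[OF hom] fdalgD j by blast
  have Kadd: "fd_add x y \<in> K" if "x \<in> K" "y \<in> K" for x y
    using that unfolding K_def by (auto simp: fd_add_fdalg hom_add[OF hom] len j)
  have Ksmult: "fd_smult c x \<in> K" if "x \<in> K" for c x
    using that unfolding K_def by (auto simp: fd_smult_fdalg hom_smult[OF hom] len j)
  have Kl: "fd_mult y x \<in> K" if "x \<in> K" "y \<in> fdalg ns" for x y
    using that car[OF that(2)] unfolding K_def by (auto simp: fd_mult_fdalg hom_mult[OF hom] len j right_mult_zero_mat)
  have Kr: "fd_mult x y \<in> K" if "x \<in> K" "y \<in> fdalg ns" for x y
    using that car[OF that(2)] unfolding K_def by (auto simp: fd_mult_fdalg hom_mult[OF hom] len j left_mult_zero_mat)
  have K0: "fd_zero ns \<in> K" unfolding K_def using hom_zero[OF hom] j by (simp add: fd_zero_fdalg)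
  have Kblk: "blk ns i M \<in> K" if i: "i < length ns" and M: "M \<in> carrier_mat (ns!i) (ns!i)" for i M
  proof -
    define n where "n = ns!i"
    have n0: "0 < n" using pos i unfolding n_def by auto
    have KE: "blk ns i (Emat n r s) \<in> K" if rs: "r < n" "s < n" for r s
    proof -
      have "blk ns i (Emat n r s) = fd_mult (fd_mult (blk ns i (Emat n r 0)) (unit11 ns i)) (blk ns i (Emat n 0 s))"
        unfolding unit11_blk[OF i] n_def[symmetric]
        using n0 by (simp add: blk_mult n_def Emat_mult)
      moreover have "unit11 ns i \<in> K" unfolding K_def using z[OF i] unit11_fdalg by auto
      ultimately show ?thesis using Kl Kr blk_fdalg[OF i] n_def by simp
    qed
    have "blk ns i (tr n M t) \<in> K" if "t \<le> n * n" for t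
      using that
    proof (induction t)
      case 0
      then show ?case using K0 blk_zero by (simp add: tr_0 n_def)
    next
      case (Suc t)
      then have t: "t < n * n" by simp
      have "t div n < n" using t by (simp add: less_mult_imp_div_less)
      moreover have "t mod n < n" using n0 by simp
      ultimately have "blk ns i (M $$ (t div n, t mod n) \<cdot>\<^sub>m Emat n (t div n) (t mod n)) \<in> K"
        using KE Ksmult blk_smult by metis
      moreover have "blk ns i (tr n M t) \<in> K" using Suc t by simp
      ultimately show ?case unfolding tr_Suc[OF t]
        using Kadd blk_add[of "tr n M t" ns i] tr_carrier n_def by (metis Emat_carrier smult_carrier_mat)
    qed
    then show ?thesis using tr_full[of M n] M n_def by (metis order_refl)
  qed
  define on :: "nat \<Rightarrow> complex mat list" where "on t = map (\<lambda>u. if u < t then 1\<^sub>m (ns!u) else 0\<^sub>m (ns!u) (ns!u)) [0..<length ns]" for t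
  have "on t \<in> K" if "t \<le> length ns" for t
    using that
  proof (induction t)
    case 0
    have "on 0 = fd_zero ns" unfolding on_def by (rule fd_eqI) auto
    then show ?case using K0 by simp
  next
    case (Suc t)
    have "on (Suc t) = fd_add (on t) (blk ns t (1\<^sub>m (ns!t)))" unfolding on_def
      by (rule fd_eqI) auto
    then show ?case using Suc Kadd Kblk by simp
  qed
  then have "on (length ns) \<in> K" by simp
  moreover have "on (length ns) = fd_one ns" unfolding on_def by (rule fd_eqI) auto
  ultimately have "fd_one ns \<in> K" by simp
  then show ?thesis unfolding K_def by simp
qed

lemma rank_outer: assumes v: "v \<in> carrier_vec n" "ip v v = 1" shows "cmat_rank (outer v v) = 1"
proof -
  interpret vec_space "TYPE(complex)" n .
  have oc: "outer v v \<in> carrier_mat n n" using v by simp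
  have dr: "dim_row (outer v v) = n" using v by simp
  have le: "rank (outer v v) \<le> 1"
    by (rule rank_le_1_product_entries[OF oc, of "\<lambda>r. v$r" "\<lambda>c. cnj (v$c)"]) simp
  obtain c where c: "c < n" "v$c \<noteq> 0" using nonzero_vec_entry[OF unit_nonzero[OF v(2)]] v by auto
  define x where "x = col (outer v v) c"
  have xc: "x \<in> carrier_vec n" unfolding x_def using oc c by simp
  have "x \<noteq> 0\<^sub>v n"
  proof
    assume "x = 0\<^sub>v n"
    moreover obtain r where r: "r < n" "v$r \<noteq> 0" using c by blast
    ultimately have "x $ r = 0" by simp
    moreover have "x $ r = v$r * cnj (v$c)" unfolding x_def using r c v by simp
    ultimately show False using r c by simp
  qed
  have "lin_indpt {}" by (metis empty_subsetI fin_dim finite_basis_exists subset_li_is_li vec_vs vectorspace.basis_def)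
  moreover have "span {} = {0\<^sub>v n}" using span_empty by simp
  ultimately have li: "lin_indpt {x}" using lin_dep_iff_in_span[of "{}" x] xc \<open>x \<noteq> 0\<^sub>v n\<close> by simp
  have "{x} \<subseteq> set (cols (outer v v))" unfolding x_def using c v by (auto simp: cols_def)
  then have "card {x} \<le> rank (outer v v)" using rank_ge_card_indpt[OF oc _ li] by blast
  then have "rank (outer v v) = 1" using le by simp
  then show ?thesis unfolding cmat_rank_def dr .
qed

lemma rank_zero: "cmat_rank (0\<^sub>m n n) = 0"
  unfolding cmat_rank_def using vec_space.rank_0I by simp



theorem lemma3p3:
  fixes ns ms :: "nat list" and \<phi> :: "complex mat list \<Rightarrow> complex mat list"
  assumes "\<forall>n\<in>set ns. 0 < n"
    and "\<forall>m\<in>set ms. 0 < m"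
    and "L_embedding ns ms \<phi>"
  shows "\<forall>j<length ms. mult_at ns ms \<phi> j = 1"
proof (intro allI impI)
  fix j0 assume j0: "j0 < length ms"
  note posn = assms(1) and posm = assms(2) and L = assms(3)
  have hom: "unital_star_hom ns ms \<phi>" using L unfolding L_embedding_def by (elim conjE)
  have Lsim: "\<forall>a\<in>fdalg ns. \<forall>a'\<in>fdalg ns. rho_sim ms (\<phi> a) (\<phi> a') = rho_sim ns a a'"
    using L unfolding L_embedding_def by (elim conjE)
  have m1: "0 < length ms" using j0 by linarith
  then have "ms!0 \<in> set ms" by (rule nth_mem)
  then have m: "0 < length ms" "0 < ms!0" using m1 posm by auto
  have ex: "\<forall>i<length ns. \<exists>J V. J < length ms \<and> V \<in> carrier_vec (ms!J) \<and> ip V V = 1 \<and> \<phi> (unit11 ns i) = rk1 ms J V"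
  proof (intro allI impI)
    fix i assume i: "i < length ns"
    have "0 < ns!i" using posn i by auto
    then show "\<exists>J V. J < length ms \<and> V \<in> carrier_vec (ms!J) \<and> ip V V = 1 \<and> \<phi> (unit11 ns i) = rk1 ms J V"
      using min_rk1[OF img_min[OF L i _ m]] by blast
  qed
  have ex2: "\<forall>i\<in>{..<length ns}. \<exists>p. fst p < length ms \<and> snd p \<in> carrier_vec (ms!(fst p)) \<and> ip (snd p) (snd p) = 1 \<and> \<phi> (unit11 ns i) = rk1 ms (fst p) (snd p)"
  proof
    fix i assume "i \<in> {..<length ns}"
    then obtain J V where "J < length ms \<and> V \<in> carrier_vec (ms!J) \<and> ip V V = 1 \<and> \<phi> (unit11 ns i) = rk1 ms J V"
      using ex by auto
    then show "\<exists>p. fst p < length ms \<and> snd p \<in> carrier_vec (ms!(fst p)) \<and> ip (snd p) (snd p) = 1 \<and> \<phi> (unit11 ns i) = rk1 ms (fst p) (snd p)"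
      by (intro exI[of _ "(J, V)"]) simp
  qed
  then obtain f where f: "\<forall>i\<in>{..<length ns}. fst (f i) < length ms \<and> snd (f i) \<in> carrier_vec (ms!(fst (f i))) \<and> ip (snd (f i)) (snd (f i)) = 1 \<and> \<phi> (unit11 ns i) = rk1 ms (fst (f i)) (snd (f i))"
    using bchoice[OF ex2] by blast
  define J where "J i = fst (f i)" for i
  define V where "V i = snd (f i)" for i
  have JV: "J i < length ms \<and> V i \<in> carrier_vec (ms!(J i)) \<and> ip (V i) (V i) = 1 \<and> \<phi> (unit11 ns i) = rk1 ms (J i) (V i)"
    if "i < length ns" for i
    using f that unfolding J_def V_def by auto
  have uniq: "i = i'" if i: "i < length ns" "i' < length ns" "J i = J i'" for i i'
  proof (rule ccontr)
    assume ne: "i \<noteq> i'"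
    have Ji: "J i < length ms" "V i \<in> carrier_vec (ms!(J i))" "ip (V i) (V i) = 1"
      and e1: "\<phi> (unit11 ns i) = rk1 ms (J i) (V i)"
      using JV[OF i(1)] by blast+
    have Ji0': "V i' \<in> carrier_vec (ms!(J i'))" "ip (V i') (V i') = 1"
      and e20: "\<phi> (unit11 ns i') = rk1 ms (J i') (V i')"
      using JV[OF i(2)] by blast+
    have Ji': "V i' \<in> carrier_vec (ms!(J i))" "ip (V i') (V i') = 1"
      and e2: "\<phi> (unit11 ns i') = rk1 ms (J i) (V i')"
      using Ji0' e20 unfolding i(3) by blast+
    have "fd_mult (rk1 ms (J i) (V i)) (rk1 ms (J i) (V i')) = \<phi> (fd_mult (unit11 ns i) (unit11 ns i'))"
      unfolding hom_mult[OF hom unit11_fdalg unit11_fdalg] e1 e2 ..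
    also have "\<dots> = fd_zero ms" using unit11_orth[OF ne] hom_zero[OF hom] by simp
    finally have "ip (V i) (V i') = 0" using rk1_orth[OF Ji Ji'] by simp
    then have "rho_sim ms (rk1 ms (J i) (V i)) (rk1 ms (J i) (V i')) \<le> 0"
      using sim_zero[OF Ji Ji'] by simp
    moreover have "rho_sim ms (\<phi> (unit11 ns i)) (\<phi> (unit11 ns i')) = rho_sim ns (unit11 ns i) (unit11 ns i')"
      using Lsim[rule_format, OF unit11_fdalg unit11_fdalg] .
    moreover have "0 < ns!i" using posn nth_mem[OF i(1)] by blast
    then have "1/2 \<le> rho_sim ns (unit11 ns i) (unit11 ns i')"
      by (rule sim_lower[OF i(1,2) ne])
    ultimately show False unfolding e1 e2 by linarith
  qed
  have exi: "\<exists>i<length ns. J i = j0"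
  proof (rule ccontr)
    assume "\<not> (\<exists>i<length ns. J i = j0)"
    then have "\<And>i. i < length ns \<Longrightarrow> \<phi> (unit11 ns i) ! j0 = 0\<^sub>m (ms!j0) (ms!j0)"
      using JV j0 by (auto simp: rk1_def)
    then have "\<phi> (fd_one ns) ! j0 = 0\<^sub>m (ms!j0) (ms!j0)" by (rule block_kill[OF hom j0 posn])
    then have "1\<^sub>m (ms!j0) = (0\<^sub>m (ms!j0) (ms!j0) :: complex mat)" using hom_one[OF hom] j0 by simp
    moreover have "0 < ms!j0" using posm nth_mem[OF j0] by blast
    ultimately have "(1\<^sub>m (ms!j0) :: complex mat) $$ (0,0) = (0\<^sub>m (ms!j0) (ms!j0) :: complex mat) $$ (0,0)" by simp
    then show False using \<open>0 < ms!j0\<close> by simp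
  qed
  then obtain i1 where i1: "i1 < length ns" "J i1 = j0" by blast
  have Em: "E_mult ns ms \<phi> i j0 = (if i = i1 then 1 else 0)" if i: "i < length ns" for i
  proof -
    have "E_mult ns ms \<phi> i j0 = cmat_rank (rk1 ms (J i) (V i) ! j0)"
      unfolding E_mult_def using JV[OF i] by simp
    also have "\<dots> = (if J i = j0 then 1 else 0)"
      using j0 JV[OF i] by (auto simp: rk1_def rank_outer rank_zero)
    also have "\<dots> = (if i = i1 then 1 else 0)"
    proof -
      have "J i = j0 \<longleftrightarrow> i = i1"
      proof
        assume "J i = j0"
        then have "J i = J i1" using i1(2) by simp
        then show "i = i1" by (rule uniq[OF i i1(1)])
      next
        assume "i = i1"
        then show "J i = j0" using i1(2) by simp
      qed
      then show ?thesis by simp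
    qed
    finally show ?thesis .
  qed
  have "mult_at ns ms \<phi> j0 = (\<Sum>i<length ns. if i = i1 then 1 else 0)"
    unfolding mult_at_def by (rule sum.cong) (auto simp: Em)
  also have "\<dots> = 1" using i1 by simp
  finally show "mult_at ns ms \<phi> j0 = 1" .
qed


end
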